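(* Let $p\ge 1$, $\alpha\in(0,1)$, $\varepsilon>0$ and $g\in\mathbb{R}^p$ with $g\neq 0$. Let $m$ be an index with $|g_m|=\max_d|g_d|$ and let $I_{12}$ be the $p\times p$ diagonal matrix with $(I_{12})_{dd}=1$ if $|g_d|\ge \alpha|g_m|$ and $0$ otherwise. Let $q_1:=\left(\|I_{12}g\|_1/\|I_{12}g\|_2\right)^2$ and $$c_{\alpha,\varepsilon}(q_1):=\left(\frac{\sqrt{2\alpha\sqrt{q_1(\alpha^2q_1 + 4\varepsilon(1-\alpha))} + q_1((1-\alpha)^3-2\alpha^2)} - (1-\alpha)\sqrt{q_1(1-\alpha)}}{\alpha\sqrt{4\varepsilon(1-\alpha)}}\right)^2.$$ If $$\Delta x_{12,c,\varepsilon}:=-I_{12}g\left(\frac{\alpha\, c_{\alpha,\varepsilon}(q_1)\,\varepsilon}{\|I_{12}g\|_1}+\frac{(1-\alpha)\sqrt{c_{\alpha,\varepsilon}(q_1)\,\varepsilon}}{\|I_{12}g\|_2}\right),$$ then $h_\alpha(\Delta x_{12,c,\varepsilon})=\varepsilon$, where $h_\alpha(v):=\alpha\|v\|_1+(1-\alpha)\|v\|_2^2$.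
   Context: $\varepsilon$ is the step size in the general stagewise procedure; $I_{12}$ selects the coordinates whose absolute gradient is at least $\alpha$ times the maximal absolute gradient. *)

theory Defs
  imports "HOL-Analysis.Analysis"
begin

definition l1norm :: "real ^ 'n \<Rightarrow> real" where
  "l1norm v = (\<Sum>d\<in>UNIV. \<bar>v $ d\<bar>)"

definition l2norm :: "real ^ 'n \<Rightarrow> real" where
  "l2norm v = sqrt (\<Sum>d\<in>UNIV. (v $ d)^2)"

definition I12 :: "real \<Rightarrow> real ^ 'n \<Rightarrow> 'n \<Rightarrow> real ^ 'n ^ 'n" where
  "I12 \<alpha> g m = (\<chi> i j. if i = j \<and> \<bar>g $ i\<bar> \<ge> \<alpha> * \<bar>g $ m\<bar> then 1 else 0)"

definition c_ae :: "real \<Rightarrow> real \<Rightarrow> real \<Rightarrow> real" where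
  "c_ae \<alpha> \<epsilon> q1 =
     ((sqrt (2 * \<alpha> * sqrt (q1 * (\<alpha>^2 * q1 + 4 * \<epsilon> * (1 - \<alpha>))) + q1 * ((1 - \<alpha>)^3 - 2 * \<alpha>^2))
        - (1 - \<alpha>) * sqrt (q1 * (1 - \<alpha>)))
      / (\<alpha> * sqrt (4 * \<epsilon> * (1 - \<alpha>))))^2"

definition h_alpha :: "real \<Rightarrow> real ^ 'n \<Rightarrow> real" where
  "h_alpha \<alpha> v = \<alpha> * l1norm v + (1 - \<alpha>) * (l2norm v)^2"

end

theory Submission
  imports Defs
begin

lemma l1norm_scale: "l1norm (k *\<^sub>R v) = \<bar>k\<bar> * l1norm v"
  by (simp add: l1norm_def abs_mult sum_distrib_left)

lemma l2norm_sq_scale: "(l2norm (k *\<^sub>R v))^2 = k^2 * (l2norm v)^2"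
  by (simp add: l2norm_def power_mult_distrib sum_distrib_left sum_nonneg)

lemma l1norm_neg: "l1norm (- v) = l1norm v"
  by (simp add: l1norm_def)

lemma l2norm_neg: "l2norm (- v) = l2norm v"
  by (simp add: l2norm_def)

lemma key_alg:
  fixes a e r L1 L2 :: real
  assumes a0: "0 < a" and a1: "a < 1" and e0: "e > 0" and L1: "L1 > 0" and L2: "L2 > 0"
    and r: "r = L1 / L2"
  shows "a * \<bar>a * c_ae a e (r^2) * e / L1 + (1 - a) * sqrt (c_ae a e (r^2) * e) / L2\<bar> * L1
     + (1 - a) * ((a * c_ae a e (r^2) * e / L1 + (1 - a) * sqrt (c_ae a e (r^2) * e) / L2)^2 * L2^2) = e"
proof -
  have r0: "r > 0" using r L1 L2 by simp
  define y where "y = (- a * r + sqrt (a^2 * r^2 + 4 * e * (1 - a))) / (2 * (1 - a))"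
  have sq1: "sqrt (a^2 * r^2 + 4 * e * (1 - a)) \<ge> a * r"
    by (rule real_le_rsqrt) (use a1 e0 in \<open>simp add: power_mult_distrib\<close>)
  have sq1': "(sqrt (a^2 * r^2 + 4 * e * (1 - a)))^2 = a^2 * r^2 + 4 * e * (1 - a)"
    using a1 e0 by (simp add: add_nonneg_nonneg)
  have y0: "y \<ge> 0" unfolding y_def using sq1 a1 by simp
  have yeq: "(1 - a) * y^2 + a * r * y = e"
  proof -
    obtain S where S: "S = sqrt (a^2 * r^2 + 4 * e * (1 - a))" by blast
    have S2: "S^2 = a^2 * r^2 + 4 * e * (1 - a)" using S sq1' by simp
    have Sy: "S = 2 * (1 - a) * y + a * r" using a1 unfolding y_def S by (simp add: field_simps)
    have "4 * (1 - a) * ((1 - a) * y^2 + a * r * y) = S^2 - a^2 * r^2"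
      unfolding Sy by (simp add: algebra_simps power2_eq_square)
    also have "\<dots> = 4 * (1 - a) * e" using S2 by (simp add: algebra_simps)
    finally show ?thesis using a1 by simp
  qed
  define s where "s = (- (1 - a) * r + sqrt ((1 - a)^2 * r^2 + 4 * a * r * y)) / (2 * a)"
  have sq2: "sqrt ((1 - a)^2 * r^2 + 4 * a * r * y) \<ge> (1 - a) * r"
    by (rule real_le_rsqrt) (use a0 r0 y0 in \<open>simp add: power_mult_distrib\<close>)
  have sq2': "(sqrt ((1 - a)^2 * r^2 + 4 * a * r * y))^2 = (1 - a)^2 * r^2 + 4 * a * r * y"
    using a0 r0 y0 by simp
  have s0: "s \<ge> 0" unfolding s_def
    by (rule divide_nonneg_pos) (use sq2 a0 in linarith, use a0 in simp)
  have seq: "a * s^2 + (1 - a) * r * s = r * y"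
  proof -
    obtain S where S: "S = sqrt ((1 - a)^2 * r^2 + 4 * a * r * y)" by blast
    have S2: "S^2 = (1 - a)^2 * r^2 + 4 * a * r * y" using S sq2' by simp
    have Ss: "S = 2 * a * s + (1 - a) * r" using a0 unfolding s_def S by (simp add: field_simps)
    have "4 * a * (a * s^2 + (1 - a) * r * s) = S^2 - (1 - a)^2 * r^2"
      unfolding Ss by (simp add: algebra_simps power2_eq_square)
    also have "\<dots> = 4 * a * (r * y)" using S2 by (simp add: algebra_simps)
    finally show ?thesis using a0 by simp
  qed
  have inner: "2 * a * sqrt (r^2 * (a^2 * r^2 + 4 * e * (1 - a))) + r^2 * ((1 - a)^3 - 2 * a^2)
      = (1 - a) * ((1 - a)^2 * r^2 + 4 * a * r * y)"
  proof -
    have "sqrt (r^2 * (a^2 * r^2 + 4 * e * (1 - a))) = r * sqrt (a^2 * r^2 + 4 * e * (1 - a))"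
      using r0 by (simp add: real_sqrt_mult)
    then show ?thesis unfolding y_def using a1 by (simp add: field_simps power2_eq_square power3_eq_cube)
  qed
  have sqi: "sqrt ((1 - a) * ((1 - a)^2 * r^2 + 4 * a * r * y)) = sqrt (1 - a) * sqrt ((1 - a)^2 * r^2 + 4 * a * r * y)"
    by (simp add: real_sqrt_mult)
  have sqq: "sqrt (r^2 * (1 - a)) = r * sqrt (1 - a)" using r0 by (simp add: real_sqrt_mult)
  have sqd: "sqrt (4 * e * (1 - a)) = 2 * sqrt e * sqrt (1 - a)"
    by (simp add: real_sqrt_mult real_sqrt_four)
  have N: "sqrt (2 * a * sqrt (r^2 * (a^2 * r^2 + 4 * e * (1 - a))) + r^2 * ((1 - a)^3 - 2 * a^2))
        - (1 - a) * sqrt (r^2 * (1 - a)) = sqrt (1 - a) * (2 * a * s)"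
    unfolding inner sqi sqq s_def using a0 by (simp add: field_simps)
  have sa: "sqrt (1 - a) > 0" using a1 by simp
  have se: "sqrt e > 0" using e0 by simp
  have c: "c_ae a e (r^2) = s^2 / e"
    unfolding c_ae_def N sqd using sa se a0
    by (simp add: power_divide power_mult_distrib)
  have ce: "c_ae a e (r^2) * e = s^2" using c e0 by simp
  have sce: "sqrt (c_ae a e (r^2) * e) = s" using ce s0 by simp
  define t where "t = a * c_ae a e (r^2) * e / L1 + (1 - a) * sqrt (c_ae a e (r^2) * e) / L2"
  have tL1: "t * L1 = r * y"
  proof -
    have t': "t = a * s^2 / L1 + (1 - a) * s / L2" unfolding t_def sce using ce by (simp add: mult.assoc)
    have "t * L1 = a * s^2 + (1 - a) * r * s" unfolding t' r using L1 L2 by (simp add: field_simps)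
    then show ?thesis using seq by simp
  qed
  have tL2: "t * L2 = y"
  proof -
    have "t * L2 = (t * L1) / r" unfolding r using L1 L2 by (simp add: field_simps)
    then show ?thesis using tL1 r0 by simp
  qed
  have t0: "t \<ge> 0" using tL2 y0 L2 by (metis zero_le_mult_iff not_less)
  have "a * \<bar>t\<bar> * L1 + (1 - a) * (t^2 * L2^2) = a * (t * L1) + (1 - a) * (t * L2)^2"
    using t0 by (simp add: power_mult_distrib)
  also have "\<dots> = e" unfolding tL1 tL2 using yeq by (simp add: algebra_simps)
  finally show ?thesis unfolding t_def .
qed

theorem theorem4:
  fixes g :: "real ^ 'n" and \<alpha> \<epsilon> :: real and m :: 'n
  assumes "0 < \<alpha>" and "\<alpha> < 1" and "\<epsilon> > 0" and "g \<noteq> 0"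
    and "\<forall>d. \<bar>g $ d\<bar> \<le> \<bar>g $ m\<bar>"
  defines "Ig \<equiv> I12 \<alpha> g m *v g"
  defines "q1 \<equiv> (l1norm Ig / l2norm Ig)^2"
  defines "c \<equiv> c_ae \<alpha> \<epsilon> q1"
  defines "\<Delta>x \<equiv> - ((\<alpha> * c * \<epsilon> / l1norm Ig + (1 - \<alpha>) * sqrt (c * \<epsilon>) / l2norm Ig) *\<^sub>R Ig)"
  shows "h_alpha \<alpha> \<Delta>x = \<epsilon>"
proof -
  have Igi: "Ig $ i = (if \<alpha> * \<bar>g $ m\<bar> \<le> \<bar>g $ i\<bar> then g $ i else 0)" for i
  proof -
    have "Ig $ i = (\<Sum>j\<in>UNIV. (if i = j \<and> \<alpha> * \<bar>g $ m\<bar> \<le> \<bar>g $ i\<bar> then 1 else 0) * g $ j)"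
      unfolding Ig_def I12_def matrix_vector_mult_def by simp
    also have "\<dots> = (\<Sum>j\<in>UNIV. if j = i then (if \<alpha> * \<bar>g $ m\<bar> \<le> \<bar>g $ i\<bar> then g $ i else 0) else 0)"
      by (rule sum.cong) auto
    finally show ?thesis by simp
  qed
  have gm: "g $ m \<noteq> 0"
  proof
    assume "g $ m = 0"
    then have "\<forall>d. g $ d = 0" using assms(5) by (metis abs_le_zero_iff abs_zero)
    then have "g = 0" by (simp add: vec_eq_iff)
    then show False using assms(4) by simp
  qed
  have "\<alpha> * \<bar>g $ m\<bar> \<le> \<bar>g $ m\<bar>"
    by (rule mult_left_le_one_le) (use assms(1,2) in auto)
  then have Igm: "Ig $ m = g $ m" using Igi[of m] by simp
  have L1: "l1norm Ig > 0"
  proof -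
    have "\<bar>Ig $ m\<bar> \<le> l1norm Ig" unfolding l1norm_def
      by (rule member_le_sum) auto
    then show ?thesis using Igm gm by simp
  qed
  have L2: "l2norm Ig > 0"
  proof -
    have "(Ig $ m)^2 \<le> (\<Sum>d\<in>UNIV. (Ig $ d)^2)"
      by (rule member_le_sum) auto
    moreover have "(Ig $ m)^2 > 0" using Igm gm by simp
    ultimately have "0 < (\<Sum>d\<in>UNIV. (Ig $ d)^2)" by linarith
    then show ?thesis unfolding l2norm_def by simp
  qed
  show ?thesis
    unfolding h_alpha_def \<Delta>x_def l1norm_neg l2norm_neg l1norm_scale l2norm_sq_scale c_def q1_def
    using key_alg[OF assms(1,2,3) L1 L2 refl] by (simp add: power_mult_distrib)
qed

end
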